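(* Let $E$ be a Euclidean vector space and $\nu$ a strongly irreducible and proximal probability measure on $\mathrm{GL}(E)$. Let $C,\beta>0$ be constants such that for all $f\in E^*\setminus\{0\}$, $v\in E\setminus\{0\}$, $n\in\mathbb{N}$ and $t\ge0$, $\mathbb{P}\big(\log\frac{\|f\|\|\overline\gamma_n\|\|v\|}{|f\overline\gamma_nv|}>t\big)\le Ce^{-\beta n}+\sum_{k\ge1}Ce^{-\beta k}N_*\nu(t/k,+\infty)$ where $\overline\gamma_n\sim\nu^{*n}$, and let $\xi^\infty_\nu$ be the unique $\nu$-stationary probability measure on $\mathrm{P}(E)$. Then (a) for every proper subspace $V\subsetneq E$ and every $0<r\le1$, $\xi^\infty_\nu(\mathcal{N}_r(V))\le\zeta^{C,\beta}_\nu(|\log r|,+\infty)$; (b) if $p>0$ and $N_*\nu$ has a finite $\mathrm{L}^p$ moment, there is a constant $C'$ such that for every proper subspace $V\subsetneq E$, $\int_{\mathrm{P}(E)}|\log\mathrm{dist}(\mathrm{P}(V),l)|^p\,d\xi^\infty_\nu(l)\le C'$; (c) if $p>0$ and $N_*\nu$ has a weak $\mathrm{L}^p$ moment, there is a constant $C'$ such that for every proper subspace $V\subsetneq E$ and every $0<r<1$, $\xi^\infty_\nu(\mathcal{N}_r(V))\le C'|\log r|^{-p}$.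
   Context: $E=\mathbb{R}^d$, $d\ge2$, Euclidean. $N(g)=\log(\|g\|\|g^{-1}\|)$ and $N_*\nu(a,+\infty)=\nu\{g:N(g)>a\}$. $\zeta^{C,\beta}_\nu$ is the probability on $\mathbb{R}_{\ge0}$ with $\zeta^{C,\beta}_\nu(t,+\infty)=\min\{1,\sum_{k\ge1}Ce^{-\beta k}N_*\nu(t/k,+\infty)\}$. $\mathrm{P}(E)$ has the metric $\mathrm{dist}([x],[y])=\|x\wedge y\|/(\|x\|\|y\|)$; $\mathrm{dist}(\mathrm{P}(V),l)=\min_{v\in V\setminus\{0\}}\mathrm{dist}([v],l)$ and $\mathcal{N}_r(V)=\{l:\mathrm{dist}(\mathrm{P}(V),l)<r\}$. $\xi$ is $\nu$-stationary if the law of $[gx]$ with $g\sim\nu$, $[x]\sim\xi$ independent equals $\xi$. A nonnegative variable $x$ has finite $\mathrm{L}^p$ moment if $\mathbb{E}(x^p)<\infty$, weak $\mathrm{L}^p$ moment if $\sup_tt^p\mathbb{P}(x>t)<\infty$. Proximal: $\nu^{*n}\{g:\rho_1(g)>\rho_2(g)\}>0$ for some $n$. Strongly irreducible: (a) for all $N\ge1$, $f_1,\dots,f_N\in E^*\setminus\{0\}$, $v\neq0$ there is $n$ with $\nu^{*n}\{g:\prod_if_igv\neq0\}>0$; (b) for all $N\ge1$, $f\neq0$, $v_1,\dots,v_N\neq0$ there is $n$ with $\nu^{*n}\{g:\prod_jfgv_j\neq0\}>0$. *)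

theory Defs
  imports "HOL-Probability.Probability" "HOL-Computational_Algebra.Polynomial"
    "HOL-Library.Multiset"
begin

type_synonym 'n mtx = "real^'n^'n"

definition opnorm :: "'n::finite mtx \<Rightarrow> real" where
  "opnorm g = onorm (\<lambda>x. g *v x)"

definition Nfun :: "'n::finite mtx \<Rightarrow> real" where
  "Nfun g = ln (opnorm g * opnorm (matrix_inv g))"

text \<open>N_* nu (a, +infinity) = nu{g : N(g) > a}\<close>
definition Ntail :: "'n::finite mtx measure \<Rightarrow> real \<Rightarrow> real" where
  "Ntail \<nu> a = measure \<nu> {g \<in> space \<nu>. Nfun g > a}"

definition zeta_tail :: "real \<Rightarrow> real \<Rightarrow> 'n::finite mtx measure \<Rightarrow> real \<Rightarrow> real" where
  "zeta_tail C \<beta> \<nu> t =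
     min 1 (\<Sum>k. C * exp (- \<beta> * real (Suc k)) * Ntail \<nu> (t / real (Suc k)))"

fun conv_pow :: "'n::finite mtx measure \<Rightarrow> nat \<Rightarrow> 'n mtx measure" where
  "conv_pow \<nu> 0 = return borel (mat 1)"
| "conv_pow \<nu> (Suc n) = distr (\<nu> \<Otimes>\<^sub>M conv_pow \<nu> n) borel (\<lambda>(g, h). g ** h)"

text \<open>Complex eigenvalues with multiplicity, moduli sorted decreasingly: rho_1 >= rho_2 >= ...\<close>
definition charpoly :: "'n::finite mtx \<Rightarrow> complex poly" where
  "charpoly g = det (\<chi> i j. (if i = j then [:0, 1:] else 0) - [:complex_of_real (g $ i $ j):])"

definition eigen_mset :: "'n::finite mtx \<Rightarrow> complex multiset" where
  "eigen_mset g = Abs_multiset (\<lambda>z. order z (charpoly g))"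

definition rho :: "'n::finite mtx \<Rightarrow> nat \<Rightarrow> real" where
  "rho g i = rev (sorted_list_of_multiset (image_mset cmod (eigen_mset g))) ! (i - 1)"

definition proximal :: "'n::finite mtx measure \<Rightarrow> bool" where
  "proximal \<nu> \<longleftrightarrow> (\<exists>n. measure (conv_pow \<nu> n) {g. rho g 1 > rho g 2} > 0)"

text \<open>Strong irreducibility, conditions (a) and (b); linear forms f in E^* are represented
  by vectors via the inner product.\<close>
definition strongly_irreducible :: "'n::finite mtx measure \<Rightarrow> bool" where
  "strongly_irreducible \<nu> \<longleftrightarrow>
     (\<forall>fs v. fs \<noteq> [] \<and> (\<forall>f\<in>set fs. f \<noteq> (0::real^'n)) \<and> v \<noteq> 0 \<longrightarrow>
        (\<exists>n. measure (conv_pow \<nu> n) {g. (\<Prod>f\<leftarrow>fs. f \<bullet> (g *v v)) \<noteq> 0} > 0)) \<and>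
     (\<forall>f vs. vs \<noteq> [] \<and> f \<noteq> (0::real^'n) \<and> (\<forall>v\<in>set vs. v \<noteq> 0) \<longrightarrow>
        (\<exists>n. measure (conv_pow \<nu> n) {g. (\<Prod>v\<leftarrow>vs. f \<bullet> (g *v v)) \<noteq> 0} > 0))"

text \<open>Projective space P(E): the set of lines, with the quotient sigma-algebra
  (which is the Borel sigma-algebra of its natural topology).\<close>
definition line :: "real^'n::finite \<Rightarrow> (real^'n) set" where
  "line x = span {x}"

definition Pspace :: "(real^'n::finite) set set" where
  "Pspace = {line x | x. x \<noteq> 0}"

definition proj_space :: "(real^'n::finite) set measure" where
  "proj_space = sigma Pspace {A. A \<subseteq> Pspace \<and> {x. x \<noteq> 0 \<and> line x \<in> A} \<in> sets borel}"

definition rep :: "(real^'n::finite) set \<Rightarrow> real^'n" where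
  "rep l = (SOME x. x \<noteq> 0 \<and> line x = l)"

text \<open>dist([x],[y]) = ||x wedge y|| / (||x|| ||y||), with ||x wedge y||^2 = ||x||^2||y||^2 - (x.y)^2\<close>
definition vdist :: "real^'n::finite \<Rightarrow> real^'n \<Rightarrow> real" where
  "vdist x y = sqrt ((norm x)\<^sup>2 * (norm y)\<^sup>2 - (x \<bullet> y)\<^sup>2) / (norm x * norm y)"

definition pdist :: "(real^'n::finite) set \<Rightarrow> (real^'n) set \<Rightarrow> real" where
  "pdist l m = vdist (rep l) (rep m)"

text \<open>dist(P(V), l) (= +infinity when P(V) is empty)\<close>
definition dist_PV :: "(real^'n::finite) set \<Rightarrow> (real^'n) set \<Rightarrow> ereal" where
  "dist_PV V l = (INF v\<in>V - {0}. ereal (pdist (line v) l))"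

definition nbhd :: "(real^'n::finite) set \<Rightarrow> real \<Rightarrow> (real^'n) set set" where
  "nbhd V r = {l \<in> Pspace. dist_PV V l < ereal r}"

text \<open>Action of GL(E) on P(E); the identity on (null) singular matrices so that it maps into P(E).\<close>
definition pact :: "'n::finite mtx \<Rightarrow> (real^'n) set \<Rightarrow> (real^'n) set" where
  "pact g l = (if invertible g then (\<lambda>x. g *v x) ` l else l)"

definition stationary :: "'n::finite mtx measure \<Rightarrow> (real^'n) set measure \<Rightarrow> bool" where
  "stationary \<nu> \<xi> \<longleftrightarrow> distr (\<nu> \<Otimes>\<^sub>M \<xi>) proj_space (\<lambda>(g, l). pact g l) = \<xi>"

definition prob_GL :: "'n::finite mtx measure \<Rightarrow> bool" where
  "prob_GL \<nu> \<longleftrightarrow> prob_space \<nu> \<and> sets \<nu> = sets borel \<and> (AE g in \<nu>. invertible g)"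

end

theory Submission
  imports Defs
begin


definition PSsets :: "(real^'n::finite) set set set" where
  "PSsets = {A. A \<subseteq> Pspace \<and> {x. x \<noteq> 0 \<and> line x \<in> A} \<in> sets borel}"

lemma line_in_Pspace: "x \<noteq> 0 \<Longrightarrow> line x \<in> Pspace"
  unfolding Pspace_def by auto

lemma zero_notin_Pspace: "{0::real^'n::finite} \<notin> Pspace"
proof
  assume "{0::real^'n} \<in> Pspace"
  then obtain x :: "real^'n" where "x \<noteq> 0" "{0} = line x" unfolding Pspace_def by blast
  moreover have "x \<in> line x" unfolding line_def by (simp add: span_base)
  ultimately show False by auto
qed

lemma sigma_algebra_PS: "sigma_algebra (Pspace::(real^'n::finite) set set) PSsets"
proof (subst sigma_algebra_iff2, intro conjI ballI allI impI)
  show "PSsets \<subseteq> Pow Pspace" unfolding PSsets_def by auto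
  show "{} \<in> PSsets" unfolding PSsets_def by auto
next
  fix s assume "s \<in> PSsets"
  then have "{x. x \<noteq> 0 \<and> line x \<in> Pspace - s} = -{0} - {x. x \<noteq> 0 \<and> line x \<in> s}"
    "{x. x \<noteq> 0 \<and> line x \<in> s} \<in> sets borel"
    unfolding PSsets_def by (auto simp: line_in_Pspace)
  then show "Pspace - s \<in> PSsets" unfolding PSsets_def by auto
next
  fix A :: "nat \<Rightarrow> _" assume "range A \<subseteq> PSsets"
  then have "{x. x \<noteq> 0 \<and> line x \<in> (\<Union>i. A i)} = (\<Union>i. {x. x \<noteq> 0 \<and> line x \<in> A i})"
    "\<And>i. {x. x \<noteq> 0 \<and> line x \<in> A i} \<in> sets borel" "\<And>i. A i \<subseteq> Pspace"
    unfolding PSsets_def by auto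
  then show "(\<Union>i. A i) \<in> PSsets" unfolding PSsets_def
    by (simp only: mem_Collect_eq) blast
qed

lemma sets_PS: "sets (proj_space::(real^'n::finite) set measure) = PSsets"
  unfolding proj_space_def PSsets_def[symmetric]
  by (rule sigma_algebra.sets_measure_of_eq[OF sigma_algebra_PS])

lemma space_PS: "space (proj_space::(real^'n::finite) set measure) = Pspace"
  unfolding proj_space_def PSsets_def[symmetric]
  by (rule sigma_algebra.space_measure_of_eq[OF sigma_algebra_PS])

lemma line_eq_range: "line x = range (\<lambda>k. k *\<^sub>R x)"
  unfolding line_def by (rule span_singleton)

lemma line_scale: "c \<noteq> 0 \<Longrightarrow> line (c *\<^sub>R x) = line x"
  unfolding line_eq_range
proof (intro set_eqI iffI)
  fix y assume "c \<noteq> 0" "y \<in> range (\<lambda>k. k *\<^sub>R c *\<^sub>R x)"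
  then show "y \<in> range (\<lambda>k. k *\<^sub>R x)" by auto
next
  fix y assume c: "c \<noteq> 0" and "y \<in> range (\<lambda>k. k *\<^sub>R x)"
  then obtain k where "y = k *\<^sub>R x" by auto
  then have "y = (k / c) *\<^sub>R c *\<^sub>R x" using c by simp
  then show "y \<in> range (\<lambda>k. k *\<^sub>R c *\<^sub>R x)" by blast
qed

lemma line_eqD:
  assumes "line y = line x" "y \<noteq> 0"
  shows "\<exists>c. c \<noteq> 0 \<and> y = c *\<^sub>R x"
proof -
  have "y \<in> line y" unfolding line_def by (simp add: span_base)
  then have "y \<in> range (\<lambda>k. k *\<^sub>R x)" using assms line_eq_range by metis
  then obtain c where "y = c *\<^sub>R x" by auto
  then show ?thesis using assms(2) by auto
qed

lemma rep_line:
  fixes x :: "real^'n::finite"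
  assumes "x \<noteq> 0"
  shows "rep (line x) \<noteq> 0 \<and> line (rep (line x)) = line x"
proof -
  have "\<exists>y. y \<noteq> 0 \<and> line y = line x" using assms by blast
  then show ?thesis unfolding rep_def by (rule someI_ex)
qed

lemma rep_line_scale:
  fixes x :: "real^'n::finite"
  assumes "x \<noteq> 0"
  shows "\<exists>c. c \<noteq> 0 \<and> rep (line x) = c *\<^sub>R x"
  using rep_line[OF assms] line_eqD by blast

lemma rep_Pspace:
  fixes l :: "(real^'n::finite) set"
  assumes "l \<in> Pspace"
  shows "rep l \<noteq> 0 \<and> line (rep l) = l"
  using assms rep_line unfolding Pspace_def by blast

lemma vdist_scale:
  fixes x y :: "real^'n::finite"
  assumes "c \<noteq> 0" "d \<noteq> 0"
  shows "vdist (c *\<^sub>R x) (d *\<^sub>R y) = vdist x y"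
proof -
  have "(norm (c *\<^sub>R x))\<^sup>2 * (norm (d *\<^sub>R y))\<^sup>2 - ((c *\<^sub>R x) \<bullet> (d *\<^sub>R y))\<^sup>2
     = (c * d)\<^sup>2 * ((norm x)\<^sup>2 * (norm y)\<^sup>2 - (x \<bullet> y)\<^sup>2)"
    by (simp add: power_mult_distrib algebra_simps)
  then have "sqrt ((norm (c *\<^sub>R x))\<^sup>2 * (norm (d *\<^sub>R y))\<^sup>2 - ((c *\<^sub>R x) \<bullet> (d *\<^sub>R y))\<^sup>2)
     = \<bar>c * d\<bar> * sqrt ((norm x)\<^sup>2 * (norm y)\<^sup>2 - (x \<bullet> y)\<^sup>2)"
    by (simp add: real_sqrt_mult)
  moreover have "norm (c *\<^sub>R x) * norm (d *\<^sub>R y) = \<bar>c * d\<bar> * (norm x * norm y)"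
    by (simp add: abs_mult)
  ultimately show ?thesis unfolding vdist_def using assms
    by (simp only:) (simp add: abs_mult)
qed

lemma pdist_line:
  fixes x y :: "real^'n::finite"
  assumes "x \<noteq> 0" "y \<noteq> 0"
  shows "pdist (line x) (line y) = vdist x y"
proof -
  obtain c d where "c \<noteq> 0" "d \<noteq> 0" "rep (line x) = c *\<^sub>R x" "rep (line y) = d *\<^sub>R y"
    using rep_line_scale assms by metis
  then show ?thesis unfolding pdist_def by (simp add: vdist_scale)
qed

lemma pact_line:
  fixes x :: "real^'n::finite"
  assumes "invertible g"
  shows "pact g (line x) = line (g *v x)"
proof -
  have "(\<lambda>y. g *v y) ` line x = line (g *v x)"
    unfolding line_def using span_linear_image[OF matrix_vector_mul_linear, of g "{x}"] by simp
  then show ?thesis using assms unfolding pact_def by simp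
qed

lemma invertible_nonzero:
  fixes x :: "real^'n::finite"
  assumes "invertible g" "x \<noteq> 0"
  shows "g *v x \<noteq> 0"
proof
  assume "g *v x = 0"
  obtain h where "h ** g = mat 1" using assms(1) unfolding invertible_def by blast
  then have "x = h *v (g *v x)" by (simp add: matrix_vector_mul_assoc)
  with \<open>g *v x = 0\<close> assms(2) show False by simp
qed

definition key :: "'n::finite \<Rightarrow> nat" where "key = to_nat_on (UNIV::'n set)"

lemma inj_key: "inj key"
  unfolding key_def by (rule inj_on_to_nat_on[OF countable_finite[OF finite]])

definition cnd :: "real^'n::finite \<Rightarrow> 'n \<Rightarrow> bool" where
  "cnd x i \<longleftrightarrow> x $ i \<noteq> 0 \<and> (\<forall>j. key j < key i \<longrightarrow> x $ j = 0)"

definition phi :: "real^'n::finite \<Rightarrow> real" where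
  "phi x = (\<Sum>i\<in>UNIV. if cnd x i then x $ i else 0)"

lemma cnd_unique: "cnd x i \<Longrightarrow> cnd x j \<Longrightarrow> i = j"
  unfolding cnd_def using inj_key
  by (metis injD linorder_neqE_nat)

lemma cnd_ex: "x \<noteq> 0 \<Longrightarrow> \<exists>i. cnd x i"
proof -
  assume "x \<noteq> 0"
  then obtain k where "x $ k \<noteq> 0" by (metis vec_eq_iff zero_index)
  then obtain i where "x $ i \<noteq> 0" "\<forall>j. x $ j \<noteq> 0 \<longrightarrow> key i \<le> key j"
    using ex_has_least_nat[of "\<lambda>i. x $ i \<noteq> 0" k key] by blast
  then show ?thesis unfolding cnd_def by (meson leD)
qed

lemma phi_eq: "cnd x i \<Longrightarrow> phi x = x $ i"
proof -
  assume c: "cnd x i"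
  have "phi x = (\<Sum>j\<in>UNIV. if j = i then x $ j else 0)"
    unfolding phi_def by (rule sum.cong) (use c cnd_unique in auto)
  then show ?thesis by simp
qed

lemma phi_nz: "x \<noteq> 0 \<Longrightarrow> phi x \<noteq> 0"
  using cnd_ex phi_eq unfolding cnd_def by metis

lemma cnd_scale: "c \<noteq> 0 \<Longrightarrow> cnd (c *\<^sub>R x) i = cnd x i"
  unfolding cnd_def by simp

lemma phi_scale: "c \<noteq> 0 \<Longrightarrow> phi (c *\<^sub>R x) = c * phi x"
  unfolding phi_def by (simp add: cnd_scale sum_distrib_left if_distrib cong: if_cong)

definition nrm :: "real^'n::finite \<Rightarrow> real^'n" where
  "nrm x = (1 / phi x) *\<^sub>R x"

lemma nrm_scale: "c \<noteq> 0 \<Longrightarrow> nrm (c *\<^sub>R x) = nrm x"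
  unfolding nrm_def by (simp add: phi_scale)

lemma nrm_nz: "x \<noteq> 0 \<Longrightarrow> nrm x \<noteq> 0"
  unfolding nrm_def using phi_nz by simp

lemma line_nrm: "x \<noteq> 0 \<Longrightarrow> line (nrm x) = line x"
  unfolding nrm_def using phi_nz[of x] line_scale[of "1 / phi x" x] by simp

definition sec :: "(real^'n::finite) set \<Rightarrow> real^'n" where
  "sec l = nrm (rep l)"

lemma sec_line: "x \<noteq> 0 \<Longrightarrow> sec (line x) = nrm x"
  unfolding sec_def using rep_line_scale nrm_scale by metis

lemma sec_Pspace: "l \<in> Pspace \<Longrightarrow> sec l \<noteq> 0 \<and> line (sec l) = l"
proof -
  assume "l \<in> Pspace"
  then obtain x where "x \<noteq> 0" "l = line x" unfolding Pspace_def by auto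
  then show ?thesis using sec_line nrm_nz line_nrm by metis
qed

lemma cnd_sets: "{x::real^'n::finite. cnd x i} \<in> sets borel"
proof -
  have "{x::real^'n. cnd x i} = {x. x $ i \<noteq> 0} \<inter> (\<Inter>j\<in>{j. key j < key i}. {x. x $ j = 0})"
    unfolding cnd_def by auto
  moreover have "\<And>j. {x::real^'n. x $ j = 0} \<in> sets borel" by measurable
  moreover have "{x::real^'n. x $ i \<noteq> 0} \<in> sets borel" by measurable
  ultimately show ?thesis by auto
qed

lemma phi_meas: "phi \<in> borel_measurable borel"
  unfolding phi_def
proof (intro borel_measurable_sum measurable_If)
  fix i
  show "{x \<in> space borel. cnd x i} \<in> sets borel" using cnd_sets by simp
qed auto

lemma nrm_meas: "nrm \<in> borel_measurable borel"
  unfolding nrm_def using phi_meas by measurable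

lemma sec_meas: "sec \<in> proj_space \<rightarrow>\<^sub>M (borel :: (real^'n::finite) measure)"
proof (rule measurableI)
  fix l :: "(real^'n) set" assume "l \<in> space proj_space"
  then show "sec l \<in> space borel" by simp
next
  fix B :: "(real^'n) set" assume B: "B \<in> sets borel"
  have "{x. x \<noteq> 0 \<and> line x \<in> sec -` B \<inter> Pspace} = -{0} \<inter> nrm -` B"
    using sec_line line_in_Pspace by auto
  moreover have "nrm -` B \<in> sets borel"
    using measurable_sets[OF nrm_meas B] by simp
  ultimately have "{x. x \<noteq> 0 \<and> line x \<in> sec -` B \<inter> Pspace} \<in> sets borel" by auto
  then show "sec -` B \<inter> space proj_space \<in> sets proj_space"
    unfolding sets_PS space_PS PSsets_def by auto
qed

definition linez :: "real^'n::finite \<Rightarrow> (real^'n) set" where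
  "linez x = (if x = 0 then line 1 else line x)"

lemma linez_Pspace: "linez x \<in> Pspace"
  unfolding linez_def by (auto intro: line_in_Pspace)

lemma linez_meas: "linez \<in> (borel :: (real^'n::finite) measure) \<rightarrow>\<^sub>M proj_space"
proof (rule measurableI)
  fix x :: "real^'n" show "linez x \<in> space proj_space" using linez_Pspace space_PS by auto
next
  fix A :: "(real^'n) set set" assume "A \<in> sets proj_space"
  then have A: "{x. x \<noteq> 0 \<and> line x \<in> A} \<in> sets borel" unfolding sets_PS PSsets_def by auto
  have "linez -` A \<inter> space borel = {x. x \<noteq> 0 \<and> line x \<in> A} \<union> (if line 1 \<in> A then {0} else {})"
    unfolding linez_def by (auto split: if_splits)
  then show "linez -` A \<inter> space borel \<in> sets borel" using A by auto
qed


lemma det_meas: "(det :: real^'n::finite^'n \<Rightarrow> real) \<in> borel_measurable borel"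
  by (rule borel_measurable_continuous_onI) (unfold det_def, intro continuous_intros)

lemma inv_sets: "{g::real^'n::finite^'n. invertible g} \<in> sets borel"
proof -
  have "{g::real^'n^'n. invertible g} = det -` (-{0})" by (auto simp: invertible_det_nz)
  then show ?thesis using measurable_sets[OF det_meas, of "-{0}"] by auto
qed

lemma mv_meas: "(\<lambda>p::(real^'n::finite^'n) \<times> (real^'n). fst p *v snd p) \<in> borel_measurable borel"
  by (rule borel_measurable_continuous_onI) (unfold matrix_vector_mult_def, intro continuous_intros)

lemma pact_inv_Pspace:
  assumes "invertible g" "l \<in> Pspace"
  shows "pact g l = linez (g *v sec l)"
proof -
  have "pact g l = pact g (line (sec l))" using sec_Pspace[OF assms(2)] by simp
  also have "\<dots> = line (g *v sec l)" using pact_line[OF assms(1)] .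
  finally show ?thesis unfolding linez_def
    using invertible_nonzero[OF assms(1)] sec_Pspace[OF assms(2)] by simp
qed

lemma pact_meas:
  "(\<lambda>(g, l). pact g l) \<in> ((borel :: (real^'n::finite^'n) measure) \<Otimes>\<^sub>M proj_space) \<rightarrow>\<^sub>M proj_space"
proof -
  let ?M = "(borel :: (real^'n::finite^'n) measure) \<Otimes>\<^sub>M proj_space"
  have "(\<lambda>p. if invertible (fst p) then linez (fst p *v sec (snd p)) else snd p) \<in> ?M \<rightarrow>\<^sub>M proj_space"
  proof (rule measurable_If)
    have "(\<lambda>p. (fst p, sec (snd p))) \<in> ?M \<rightarrow>\<^sub>M (borel \<Otimes>\<^sub>M borel)"
      using sec_meas by (intro measurable_Pair measurable_fst'' measurable_compose[OF measurable_snd sec_meas] measurable_ident[unfolded id_def])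
    then have "(\<lambda>p. (fst p, sec (snd p))) \<in> ?M \<rightarrow>\<^sub>M borel"
      by (simp only: borel_prod)
    from measurable_compose[OF this mv_meas]
    have "(\<lambda>p. fst p *v sec (snd p)) \<in> ?M \<rightarrow>\<^sub>M borel" by simp
    from measurable_compose[OF this linez_meas]
    show "(\<lambda>p. linez (fst p *v sec (snd p))) \<in> ?M \<rightarrow>\<^sub>M proj_space" .
    show "snd \<in> ?M \<rightarrow>\<^sub>M proj_space" by (rule measurable_snd)
    have "{p \<in> space ?M. invertible (fst p)} = fst -` {g. invertible g} \<inter> space ?M" by blast
    also have "\<dots> \<in> sets ?M"
      by (rule measurable_sets[OF measurable_fst]) (simp add: inv_sets)
    finally show "{p \<in> space ?M. invertible (fst p)} \<in> sets ?M" .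
  qed
  moreover have "\<And>p. p \<in> space ?M \<Longrightarrow> (\<lambda>(g, l). pact g l) p =
      (if invertible (fst p) then linez (fst p *v sec (snd p)) else snd p)"
  proof -
    fix p :: "(real^'n^'n) \<times> (real^'n) set" assume "p \<in> space ?M"
    then obtain g l where p: "p = (g, l)" "l \<in> Pspace" by (auto simp: space_pair_measure space_PS)
    show "(\<lambda>(g, l). pact g l) p = (if invertible (fst p) then linez (fst p *v sec (snd p)) else snd p)"
      using p pact_inv_Pspace[of g l] by (simp add: pact_def)
  qed
  ultimately show ?thesis using measurable_cong[of ?M "\<lambda>(g, l). pact g l"] by simp
qed

definition opn :: "real^'n::finite^'n \<Rightarrow> real" where "opn g = opnorm g"

lemma opnorm_le_sum: "opnorm (g::real^'n::finite^'n) \<le> real (CARD('n)) * real (CARD('n)) * norm g"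
  unfolding opnorm_def
proof (rule onorm_le_matrix_component)
  fix i j
  have "\<bar>g $ i $ j\<bar> \<le> norm (g $ i)" by (rule component_le_norm_cart)
  also have "\<dots> \<le> norm g" by (rule Finite_Cartesian_Product.norm_nth_le)
  finally show "\<bar>g $ i $ j\<bar> \<le> norm g" .
qed

lemma opnorm_cont: "continuous_on UNIV (opnorm :: real^'n::finite^'n \<Rightarrow> real)"
proof (rule lipschitz_on_continuous_on[OF lipschitz_onI])
  let ?K = "real (CARD('n)) * real (CARD('n))"
  have tri: "opnorm g \<le> opnorm h + ?K * norm (g - h)" for g h :: "real^'n^'n"
  proof -
    have "opnorm g = onorm (\<lambda>x. (g - h) *v x + h *v x)"
      unfolding opnorm_def by (simp add: matrix_vector_mult_diff_rdistrib)
    also have "\<dots> \<le> opnorm (g - h) + opnorm h"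
      unfolding opnorm_def by (rule onorm_triangle) auto
    finally show ?thesis using opnorm_le_sum[of "g - h"] by linarith
  qed
  fix g h :: "real^'n^'n"
  show "dist (opnorm g) (opnorm h) \<le> ?K * dist g h"
    using tri[of g h] tri[of h g] by (simp add: dist_real_def dist_norm norm_minus_commute abs_le_iff)
qed simp

lemma opnorm_meas [measurable]: "(opnorm :: real^'n::finite^'n \<Rightarrow> real) \<in> borel_measurable borel"
  by (rule borel_measurable_continuous_onI[OF opnorm_cont])




lemma mm_meas: "(\<lambda>p::(real^'n::finite^'n) \<times> (real^'n^'n). fst p ** snd p) \<in> borel_measurable borel"
  by (rule borel_measurable_continuous_onI) (unfold matrix_matrix_mult_def, intro continuous_intros)

lemma sets_conv_pow: "sets (conv_pow \<nu> n) = sets borel"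
  by (cases n) auto

lemma space_conv_pow: "space (conv_pow \<nu> n) = UNIV"
  using sets_eq_imp_space_eq[OF sets_conv_pow[of \<nu> n]] by simp

lemma mult_meas:
  fixes M N :: "(real^'n::finite^'n) measure"
  assumes "sets M = sets borel" "sets N = sets borel"
  shows "(\<lambda>(g, h). g ** h) \<in> (M \<Otimes>\<^sub>M N) \<rightarrow>\<^sub>M (borel :: (real^'n::finite^'n) measure)"
proof -
  have mm: "(\<lambda>p::(real^'n^'n) \<times> (real^'n^'n). fst p ** snd p) \<in> (borel \<Otimes>\<^sub>M borel) \<rightarrow>\<^sub>M borel"
    using mm_meas by (simp only: borel_prod)
  have "sets (M \<Otimes>\<^sub>M N) = sets (borel \<Otimes>\<^sub>M borel)"
    using assms by (rule sets_pair_measure_cong)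
  then have eq: "measurable (M \<Otimes>\<^sub>M N) (borel :: (real^'n^'n) measure) = measurable (borel \<Otimes>\<^sub>M borel) borel"
    by (rule measurable_cong_sets) (rule refl)
  show ?thesis unfolding eq case_prod_beta' by (rule mm)
qed

lemma prob_conv_pow:
  fixes \<nu> :: "(real^'n::finite^'n) measure"
  assumes "prob_space \<nu>" "sets \<nu> = sets borel"
  shows "prob_space (conv_pow \<nu> n)"
proof (induction n)
  case 0
  then show ?case by (simp add: prob_space_return)
next
  case (Suc n)
  have "prob_space (\<nu> \<Otimes>\<^sub>M conv_pow \<nu> n)" by (rule prob_space_pair[OF assms(1) Suc])
  then have "prob_space (distr (\<nu> \<Otimes>\<^sub>M conv_pow \<nu> n) borel (\<lambda>(g, h). g ** h))"
    by (rule prob_space.prob_space_distr[OF _ mult_meas[OF assms(2) sets_conv_pow]])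
  then show ?case by simp
qed

lemma AE_inv_conv_pow:
  fixes \<nu> :: "(real^'n::finite^'n) measure"
  assumes nu: "prob_GL \<nu>"
  shows "AE g in conv_pow \<nu> n. invertible g"
proof (induction n)
  case 0
  have "Measurable.pred borel (invertible :: real^'n^'n \<Rightarrow> bool)"
    using inv_sets by (simp add: pred_def)
  moreover have "invertible (mat 1 :: real^'n^'n)"
    unfolding invertible_def by (intro exI[of _ "mat 1"]) simp
  ultimately have "AE g in return borel (mat 1 :: real^'n^'n). invertible g"
    by (subst AE_return) auto
  then show ?case unfolding conv_pow.simps(1) .
next
  case (Suc n)
  have p: "prob_space \<nu>" "sets \<nu> = sets borel" "AE g in \<nu>. invertible g"
    using nu unfolding prob_GL_def by auto
  interpret P: pair_prob_space \<nu> "conv_pow \<nu> n"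
    using p prob_conv_pow[OF p(1,2)] by (simp add: pair_prob_space_def pair_sigma_finite_def
       prob_space_imp_sigma_finite)
  have m: "(\<lambda>(g, h). g ** h) \<in> (\<nu> \<Otimes>\<^sub>M conv_pow \<nu> n) \<rightarrow>\<^sub>M (borel :: (real^'n^'n) measure)"
    using mult_meas[OF p(2) sets_conv_pow] .
  have s: "{x \<in> space (borel :: (real^'n^'n) measure). invertible x} \<in> sets borel"
    using inv_sets by simp
  have "AE p in \<nu> \<Otimes>\<^sub>M conv_pow \<nu> n. invertible ((\<lambda>(g, h). g ** h) p)"
  proof (rule P.AE_pair_measure)
    have "{p \<in> space (\<nu> \<Otimes>\<^sub>M conv_pow \<nu> n). invertible ((\<lambda>(g, h). g ** h) p)}
        = (\<lambda>(g, h). g ** h) -` {x \<in> space borel. invertible x} \<inter> space (\<nu> \<Otimes>\<^sub>M conv_pow \<nu> n)"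
      by auto
    then show "{p \<in> space (\<nu> \<Otimes>\<^sub>M conv_pow \<nu> n). invertible ((\<lambda>(g, h). g ** h) p)} \<in> sets (\<nu> \<Otimes>\<^sub>M conv_pow \<nu> n)"
      using measurable_sets[OF m s] by simp
    show "AE x in \<nu>. AE y in conv_pow \<nu> n. invertible ((\<lambda>(g, h). g ** h) (x, y))"
      using p(3)
    proof (rule AE_mp[OF _ AE_I2], intro impI)
      fix x :: "real^'n^'n" assume "invertible x"
      show "AE y in conv_pow \<nu> n. invertible ((\<lambda>(g, h). g ** h) (x, y))"
        using Suc by (rule AE_mp[OF _ AE_I2]) (auto intro: invertible_mult[OF \<open>invertible x\<close>])
    qed
  qed
  then show ?case unfolding conv_pow.simps(2) using AE_distr_iff[OF m s] by simp
qed


lemma pact_meas_gen: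
  fixes M :: "(real^'n::finite^'n) measure" and X :: "(real^'n) set measure"
  assumes "sets M = sets borel" "sets X = sets proj_space"
  shows "(\<lambda>(g, l). pact g l) \<in> (M \<Otimes>\<^sub>M X) \<rightarrow>\<^sub>M proj_space"
  using pact_meas measurable_cong_sets[OF sets_pair_measure_cong[OF assms] refl] by blast

lemma pact_comp:
  assumes "invertible g" "invertible h"
  shows "pact (g ** h) l = pact g (pact h l)"
proof -
  have "invertible (g ** h)" using assms invertible_mult by blast
  then show ?thesis using assms unfolding pact_def
    by (simp add: image_image matrix_vector_mul_assoc)
qed

lemma pact_id: "pact (mat 1 :: real^'n::finite^'n) l = l"
proof -
  have "invertible (mat 1 :: real^'n^'n)"
    unfolding invertible_def by (intro exI[of _ "mat 1"]) simp
  then show ?thesis unfolding pact_def by simp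
qed

lemma pact_Pspace: "l \<in> Pspace \<Longrightarrow> pact g l \<in> Pspace"
  using pact_inv_Pspace[of g l] linez_Pspace by (cases "invertible g") (auto simp: pact_def)

lemma stat_pow:
  fixes \<nu> :: "(real^'n::finite^'n) measure" and \<xi> :: "(real^'n) set measure"
  assumes nu: "prob_GL \<nu>" and xi: "prob_space \<xi>" "sets \<xi> = sets proj_space" "stationary \<nu> \<xi>"
  shows "distr (conv_pow \<nu> n \<Otimes>\<^sub>M \<xi>) proj_space (\<lambda>(g, l). pact g l) = \<xi>"
proof -
  let ?\<Phi> = "\<lambda>(g::real^'n^'n, l::(real^'n) set). pact g l"
  have p: "prob_space \<nu>" "sets \<nu> = sets borel" "AE g in \<nu>. invertible g"
    using nu unfolding prob_GL_def by auto
  have spx: "space \<xi> = Pspace" using sets_eq_imp_space_eq[OF xi(2)] space_PS by simp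
  have spn: "space \<nu> = UNIV" using sets_eq_imp_space_eq[OF p(2)] by simp
  have slice: "(\<lambda>g. (g, l)) -` (?\<Phi> -` A \<inter> space (M \<Otimes>\<^sub>M \<xi>)) = {g. pact g l \<in> A}"
    if "space M = UNIV" "l \<in> Pspace" for M :: "(real^'n^'n) measure" and l A
    using that by (auto simp: space_pair_measure spx)
  have Q: "?\<Phi> -` A \<inter> space (M \<Otimes>\<^sub>M \<xi>) \<in> sets (M \<Otimes>\<^sub>M \<xi>)"
    if "sets M = sets borel" "A \<in> sets proj_space" for M :: "(real^'n^'n) measure" and A
    using measurable_sets[OF pact_meas_gen[OF that(1) xi(2)] that(2)] .
  show ?thesis
  proof (induction n)
    case 0
    let ?R = "return borel (mat 1 :: real^'n^'n)"
    interpret P: pair_sigma_finite ?R \<xi>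
      using xi(1) prob_space_return[of "mat 1" borel]
      unfolding pair_sigma_finite_def by (auto intro: prob_space_imp_sigma_finite)
    have sR: "sets ?R = sets borel" "space ?R = UNIV" by auto
    show ?case
    proof (rule measure_eqI)
      show "sets (distr (conv_pow \<nu> 0 \<Otimes>\<^sub>M \<xi>) proj_space ?\<Phi>) = sets \<xi>" using xi(2) by simp
      fix A assume "A \<in> sets (distr (conv_pow \<nu> 0 \<Otimes>\<^sub>M \<xi>) proj_space ?\<Phi>)"
      then have A: "A \<in> sets proj_space" by simp
      have "emeasure (distr (conv_pow \<nu> 0 \<Otimes>\<^sub>M \<xi>) proj_space ?\<Phi>) A
          = emeasure (?R \<Otimes>\<^sub>M \<xi>) (?\<Phi> -` A \<inter> space (?R \<Otimes>\<^sub>M \<xi>))"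
        unfolding conv_pow.simps(1) by (rule emeasure_distr[OF pact_meas_gen[OF sR(1) xi(2)] A])
      also have "\<dots> = (\<integral>\<^sup>+ l. emeasure ?R ((\<lambda>g. (g, l)) -` (?\<Phi> -` A \<inter> space (?R \<Otimes>\<^sub>M \<xi>))) \<partial>\<xi>)"
        by (rule P.emeasure_pair_measure_alt2[OF Q[OF sR(1) A]])
      also have "\<dots> = (\<integral>\<^sup>+ l. indicator A l \<partial>\<xi>)"
      proof (rule nn_integral_cong)
        fix l assume l: "l \<in> space \<xi>"
        have "(\<lambda>g. (g, l)) -` (?\<Phi> -` A \<inter> space (?R \<Otimes>\<^sub>M \<xi>)) \<in> sets ?R"
          by (rule sets_Pair2[OF Q[OF sR(1) A]])
        then show "emeasure ?R ((\<lambda>g. (g, l)) -` (?\<Phi> -` A \<inter> space (?R \<Otimes>\<^sub>M \<xi>))) = indicator A l"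
          using slice[OF sR(2), of l A] l spx by (simp add: pact_id indicator_def)
      qed
      also have "\<dots> = emeasure \<xi> A" using A xi(2) by simp
      finally show "emeasure (distr (conv_pow \<nu> 0 \<Otimes>\<^sub>M \<xi>) proj_space ?\<Phi>) A = emeasure \<xi> A" .
    qed
  next
    case (Suc n)
    let ?M = "conv_pow \<nu> n" and ?M' = "conv_pow \<nu> (Suc n)"
    have pM: "prob_space ?M" "prob_space ?M'" by (rule prob_conv_pow[OF p(1,2)])+
    interpret P1: pair_sigma_finite \<nu> ?M
      using p(1) pM by (simp add: pair_sigma_finite_def prob_space_imp_sigma_finite)
    interpret P2: pair_sigma_finite \<nu> \<xi>
      using p(1) xi(1) by (simp add: pair_sigma_finite_def prob_space_imp_sigma_finite)
    interpret P3: pair_sigma_finite ?M \<xi>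
      using pM xi(1) by (simp add: pair_sigma_finite_def prob_space_imp_sigma_finite)
    interpret P4: pair_sigma_finite ?M' \<xi>
      using pM xi(1) by (simp add: pair_sigma_finite_def prob_space_imp_sigma_finite)
    show ?case
    proof (rule measure_eqI)
      show "sets (distr (?M' \<Otimes>\<^sub>M \<xi>) proj_space ?\<Phi>) = sets \<xi>" using xi(2) by simp
      fix A assume "A \<in> sets (distr (?M' \<Otimes>\<^sub>M \<xi>) proj_space ?\<Phi>)"
      then have A: "A \<in> sets proj_space" by simp
      define F where "F m = emeasure \<nu> {g. pact g m \<in> A}" for m
      let ?Q2 = "?\<Phi> -` A \<inter> space (\<nu> \<Otimes>\<^sub>M \<xi>)"
      have Fsl: "F m = emeasure \<nu> ((\<lambda>g. (g, m)) -` ?Q2)" if "m \<in> space \<xi>" for m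
        unfolding F_def using slice[OF spn, of m A] that spx by simp
      have m1: "(\<lambda>m. emeasure \<nu> ((\<lambda>g. (g, m)) -` ?Q2)) \<in> borel_measurable \<xi>"
        by (rule P2.measurable_emeasure_Pair2[OF Q[OF p(2) A]])
      have "F \<in> borel_measurable \<xi> \<longleftrightarrow> (\<lambda>m. emeasure \<nu> ((\<lambda>g. (g, m)) -` ?Q2)) \<in> borel_measurable \<xi>"
        by (rule measurable_cong) (rule Fsl)
      then have "F \<in> borel_measurable \<xi>" using m1 by blast
      then have Fm: "F \<in> borel_measurable proj_space"
        using measurable_cong_sets[OF xi(2) refl] by blast
      have step2: "emeasure ?M' {g. pact g l \<in> A} = (\<integral>\<^sup>+ h. F (pact h l) \<partial>?M)"
        if l: "l \<in> Pspace" for l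
      proof -
        let ?S = "{g. pact g l \<in> A}"
        have "?S \<in> sets ?M'"
          using sets_Pair2[OF Q[OF sets_conv_pow[of \<nu> "Suc n"] A], of l]
            slice[OF space_conv_pow[of \<nu> "Suc n"] l, of A] by simp
        then have S: "?S \<in> sets borel" using sets_conv_pow[of \<nu> "Suc n"] by metis
        let ?m = "\<lambda>(g::real^'n^'n, h::real^'n^'n). g ** h"
        have mm: "?m \<in> (\<nu> \<Otimes>\<^sub>M ?M) \<rightarrow>\<^sub>M borel" by (rule mult_meas[OF p(2) sets_conv_pow])
        have "emeasure ?M' ?S = emeasure (\<nu> \<Otimes>\<^sub>M ?M) (?m -` ?S \<inter> space (\<nu> \<Otimes>\<^sub>M ?M))"
          unfolding conv_pow.simps(2) by (rule emeasure_distr[OF mm S])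
        also have "\<dots> = (\<integral>\<^sup>+ h. emeasure \<nu> ((\<lambda>g. (g, h)) -` (?m -` ?S \<inter> space (\<nu> \<Otimes>\<^sub>M ?M))) \<partial>?M)"
          by (rule P1.emeasure_pair_measure_alt2) (rule measurable_sets[OF mm S])
        also have "\<dots> = (\<integral>\<^sup>+ h. F (pact h l) \<partial>?M)"
        proof (rule nn_integral_cong_AE)
          show "AE h in ?M. emeasure \<nu> ((\<lambda>g. (g, h)) -` (?m -` ?S \<inter> space (\<nu> \<Otimes>\<^sub>M ?M))) = F (pact h l)"
            using AE_inv_conv_pow[OF nu, of n]
          proof (rule AE_mp[OF _ AE_I2], intro impI)
            fix h :: "real^'n^'n" assume h: "invertible h"
            have e1: "(\<lambda>g. (g, h)) -` (?m -` ?S \<inter> space (\<nu> \<Otimes>\<^sub>M ?M)) = {g. pact (g ** h) l \<in> A}"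
              by (auto simp: space_pair_measure spn space_conv_pow)
            have s1: "{g. pact (g ** h) l \<in> A} \<in> sets \<nu>"
              using sets_Pair2[OF measurable_sets[OF mm S], of h] e1 by simp
            have pl: "pact h l \<in> Pspace" using pact_Pspace[OF l] .
            have s2: "{g. pact g (pact h l) \<in> A} \<in> sets \<nu>"
              using sets_Pair2[OF Q[OF p(2) A], of "pact h l"] slice[OF spn pl, of A] by simp
            have "emeasure \<nu> {g. pact (g ** h) l \<in> A} = emeasure \<nu> {g. pact g (pact h l) \<in> A}"
            proof (rule emeasure_eq_AE[OF _ s1 s2])
              show "AE g in \<nu>. (g \<in> {g. pact (g ** h) l \<in> A}) = (g \<in> {g. pact g (pact h l) \<in> A})"
                using p(3) by (rule AE_mp[OF _ AE_I2]) (auto simp: pact_comp[OF _ h])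
            qed
            then show "emeasure \<nu> ((\<lambda>g. (g, h)) -` (?m -` ?S \<inter> space (\<nu> \<Otimes>\<^sub>M ?M))) = F (pact h l)"
              unfolding e1 F_def .
          qed
        qed
        finally show ?thesis .
      qed
      have "emeasure (distr (?M' \<Otimes>\<^sub>M \<xi>) proj_space ?\<Phi>) A
          = emeasure (?M' \<Otimes>\<^sub>M \<xi>) (?\<Phi> -` A \<inter> space (?M' \<Otimes>\<^sub>M \<xi>))"
        by (rule emeasure_distr[OF pact_meas_gen[OF sets_conv_pow xi(2)] A])
      also have "\<dots> = (\<integral>\<^sup>+ l. emeasure ?M' ((\<lambda>g. (g, l)) -` (?\<Phi> -` A \<inter> space (?M' \<Otimes>\<^sub>M \<xi>))) \<partial>\<xi>)"
        by (rule P4.emeasure_pair_measure_alt2[OF Q[OF sets_conv_pow A]])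
      also have "\<dots> = (\<integral>\<^sup>+ l. (\<integral>\<^sup>+ h. F (pact h l) \<partial>?M) \<partial>\<xi>)"
      proof (rule nn_integral_cong)
        fix l assume "l \<in> space \<xi>"
        then have l: "l \<in> Pspace" using spx by simp
        show "emeasure ?M' ((\<lambda>g. (g, l)) -` (?\<Phi> -` A \<inter> space (?M' \<Otimes>\<^sub>M \<xi>))) = (\<integral>\<^sup>+ h. F (pact h l) \<partial>?M)"
          unfolding slice[OF space_conv_pow[of \<nu> "Suc n"] l, of A] by (rule step2[OF l])
      qed
      also have "\<dots> = (\<integral>\<^sup>+ p. F (?\<Phi> p) \<partial>(?M \<Otimes>\<^sub>M \<xi>))"
        using P3.nn_integral_snd[OF measurable_compose[OF pact_meas_gen[OF sets_conv_pow xi(2)] Fm]]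
        by simp
      also have "\<dots> = (\<integral>\<^sup>+ m. F m \<partial>(distr (?M \<Otimes>\<^sub>M \<xi>) proj_space ?\<Phi>))"
      proof -
        have Fd: "F \<in> borel_measurable (distr (?M \<Otimes>\<^sub>M \<xi>) proj_space ?\<Phi>)" using Fm by simp
        show ?thesis by (rule nn_integral_distr[symmetric, OF pact_meas_gen[OF sets_conv_pow xi(2)] Fd])
      qed
      also have "\<dots> = (\<integral>\<^sup>+ m. F m \<partial>\<xi>)" using Suc.IH by simp
      also have "\<dots> = (\<integral>\<^sup>+ m. emeasure \<nu> ((\<lambda>g. (g, m)) -` ?Q2) \<partial>\<xi>)"
        by (rule nn_integral_cong) (rule Fsl)
      also have "\<dots> = emeasure (\<nu> \<Otimes>\<^sub>M \<xi>) ?Q2"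
        by (rule P2.emeasure_pair_measure_alt2[symmetric, OF Q[OF p(2) A]])
      also have "\<dots> = emeasure (distr (\<nu> \<Otimes>\<^sub>M \<xi>) proj_space ?\<Phi>) A"
        by (rule emeasure_distr[symmetric, OF pact_meas_gen[OF p(2) xi(2)] A])
      also have "\<dots> = emeasure \<xi> A" using xi(3) unfolding stationary_def by simp
      finally show "emeasure (distr (?M' \<Otimes>\<^sub>M \<xi>) proj_space ?\<Phi>) A = emeasure \<xi> A" .
    qed
  qed
qed




lemma vdist_arg_nonneg: "0 \<le> (norm x)\<^sup>2 * (norm y)\<^sup>2 - (x \<bullet> y)\<^sup>2" for x y :: "real^'n::finite"
proof -
  have "\<bar>x \<bullet> y\<bar> \<le> norm x * norm y" by (rule Cauchy_Schwarz_ineq2)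
  then have "(x \<bullet> y)\<^sup>2 \<le> (norm x * norm y)\<^sup>2"
    by (metis abs_ge_zero power2_abs power_mono)
  then show ?thesis by (simp add: power_mult_distrib)
qed

lemma vdist_nonneg: "0 \<le> vdist x y"
  unfolding vdist_def using vdist_arg_nonneg[of x y] by simp

lemma vdist_le1: "vdist x y \<le> 1"
proof (cases "x = 0 \<or> y = 0")
  case True then show ?thesis unfolding vdist_def by auto
next
  case False
  then have pos: "norm x * norm y > 0" by simp
  have "sqrt ((norm x)\<^sup>2 * (norm y)\<^sup>2 - (x \<bullet> y)\<^sup>2) \<le> sqrt ((norm x * norm y)\<^sup>2)"
    by (rule real_sqrt_le_mono) (simp add: power_mult_distrib)
  also have "\<dots> = norm x * norm y" using pos by simp
  finally show ?thesis unfolding vdist_def using pos by simp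
qed

lemma vdist_geom:
  fixes f w y :: "real^'n::finite"
  assumes fw: "f \<bullet> w = 0" and w: "w \<noteq> 0" and y: "y \<noteq> 0"
  shows "\<bar>f \<bullet> y\<bar> \<le> norm f * (norm y * vdist w y)"
proof -
  define c where "c = (w \<bullet> y) / (norm w)\<^sup>2"
  define z where "z = y - c *\<^sub>R w"
  have nw: "norm w > 0" using w by simp
  have fz: "f \<bullet> y = f \<bullet> z" unfolding z_def using fw by (simp add: inner_diff_right)
  have "(norm z)\<^sup>2 = z \<bullet> z" by (simp add: power2_norm_eq_inner)
  also have "\<dots> = y \<bullet> y - 2 * c * (w \<bullet> y) + c\<^sup>2 * (w \<bullet> w)"
    unfolding z_def by (simp add: algebra_simps inner_commute power2_eq_square)
  also have "\<dots> = (norm y)\<^sup>2 - (w \<bullet> y)\<^sup>2 / (norm w)\<^sup>2"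
    unfolding c_def using nw by (simp add: power2_norm_eq_inner[symmetric] field_simps power2_eq_square)
  finally have nz: "(norm z)\<^sup>2 = (norm y)\<^sup>2 - (w \<bullet> y)\<^sup>2 / (norm w)\<^sup>2" .
  have "(norm w * norm z)\<^sup>2 = (norm w)\<^sup>2 * (norm y)\<^sup>2 - (w \<bullet> y)\<^sup>2"
    using nw by (simp add: power_mult_distrib nz field_simps)
  then have "sqrt ((norm w)\<^sup>2 * (norm y)\<^sup>2 - (w \<bullet> y)\<^sup>2) = norm w * norm z"
    by (metis abs_of_nonneg norm_ge_zero real_sqrt_abs zero_le_mult_iff)
  then have "vdist w y = norm w * norm z / (norm w * norm y)" unfolding vdist_def by simp
  then have "norm y * vdist w y = norm z" using nw y by (simp add: field_simps)
  moreover have "\<bar>f \<bullet> y\<bar> \<le> norm f * norm z" unfolding fz by (rule Cauchy_Schwarz_ineq2)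
  ultimately show ?thesis by simp
qed

lemma vdist_cont: "continuous_on (-{0}) (vdist v)" if "v \<noteq> 0" for v :: "real^'n::finite"
  unfolding vdist_def using that by (intro continuous_intros) auto

lemma nbhd_iff:
  "l \<in> nbhd V r \<longleftrightarrow> l \<in> Pspace \<and> (\<exists>v\<in>V - {0}. pdist (line v) l < r)"
  unfolding nbhd_def dist_PV_def by (simp add: INF_less_iff)

lemma nbhd_sets: "nbhd V r \<in> sets (proj_space :: (real^'n::finite) set measure)"
proof -
  have eq: "{x. x \<noteq> 0 \<and> line x \<in> nbhd V r} = (\<Union>v\<in>V - {0}. -{0} \<inter> vdist v -` {..<r})"
    by (auto simp: nbhd_iff line_in_Pspace pdist_line)
  have "open (-{0} \<inter> vdist v -` {..<r})" if "v \<in> V - {0}" for v :: "real^'n"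
    by (rule continuous_open_preimage[OF vdist_cont]) (use that in auto)
  then have "open {x. x \<noteq> 0 \<and> line x \<in> nbhd V r}" unfolding eq by blast
  then have "{x. x \<noteq> 0 \<and> line x \<in> nbhd V r} \<in> sets borel" by simp
  moreover have "nbhd V r \<subseteq> Pspace" unfolding nbhd_def by auto
  ultimately show ?thesis unfolding sets_PS PSsets_def by simp
qed

lemma mv1_meas [measurable]: "(\<lambda>g::real^'n::finite^'n. g *v v) \<in> borel_measurable borel"
  by (rule borel_measurable_continuous_onI) (unfold matrix_vector_mult_def, intro continuous_intros)

lemma bad_sets:
  fixes f v :: "real^'n::finite"
  shows "{g::real^'n^'n. f \<bullet> (g *v v) = 0 \<or>
             ln (norm f * opnorm g * norm v / \<bar>f \<bullet> (g *v v)\<bar>) > t} \<in> sets borel"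
  by measurable




lemma bad_incl:
  fixes f v :: "real^'n::finite" and g :: "real^'n^'n"
  assumes V: "\<And>w. w \<in> V \<Longrightarrow> f \<bullet> w = 0" and f: "f \<noteq> 0"
    and r: "0 < r" "r \<le> 1" and v: "v \<noteq> 0" and g: "invertible g"
    and inA: "pact g (line v) \<in> nbhd V r"
  shows "f \<bullet> (g *v v) = 0 \<or> ln (norm f * opnorm g * norm v / \<bar>f \<bullet> (g *v v)\<bar>) > \<bar>ln r\<bar>"
proof (cases "f \<bullet> (g *v v) = 0")
  case False
  let ?y = "g *v v"
  have y: "?y \<noteq> 0" using invertible_nonzero[OF g v] .
  have "line ?y \<in> nbhd V r" using inA pact_line[OF g] by simp
  then obtain w where w: "w \<in> V" "w \<noteq> 0" "pdist (line w) (line ?y) < r"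
    unfolding nbhd_iff by auto
  have vd: "vdist w ?y < r" using w(3) pdist_line[OF w(2) y] by simp
  have "\<bar>f \<bullet> ?y\<bar> \<le> norm f * (norm ?y * vdist w ?y)"
    by (rule vdist_geom[OF V[OF w(1)] w(2) y])
  also have "\<dots> < norm f * (norm ?y * r)"
    using vd f y by (intro mult_strict_left_mono) auto
  also have "\<dots> \<le> norm f * (opnorm g * norm v * r)"
  proof -
    have "norm ?y \<le> opnorm g * norm v"
      unfolding opnorm_def by (rule onorm) simp
    then show ?thesis using r by (intro mult_left_mono) auto
  qed
  finally have lt: "\<bar>f \<bullet> ?y\<bar> < norm f * opnorm g * norm v * r" by (simp add: mult.assoc)
  have pos: "\<bar>f \<bullet> ?y\<bar> > 0" using False by simp
  have q1: "1 / r < norm f * opnorm g * norm v / \<bar>f \<bullet> ?y\<bar>"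
    using lt pos r by (simp add: field_simps)
  have q0: "0 < 1 / r" using r by simp
  have q2: "0 < norm f * opnorm g * norm v / \<bar>f \<bullet> ?y\<bar>" using less_trans[OF q0 q1] .
  have "ln (1 / r) < ln (norm f * opnorm g * norm v / \<bar>f \<bullet> ?y\<bar>)"
    using ln_less_cancel_iff[OF q0 q2] q1 by blast
  moreover have "ln (1 / r) = \<bar>ln r\<bar>" using r by (simp add: ln_div ln_le_zero_iff abs_if)
  ultimately show ?thesis by simp
qed simp

lemma core_bound:
  fixes \<nu> :: "(real^'n::finite^'n) measure" and \<xi> :: "(real^'n) set measure"
  assumes nu: "prob_GL \<nu>" and xi: "prob_space \<xi>" "sets \<xi> = sets proj_space" "stationary \<nu> \<xi>"
    and r: "0 < r" "r \<le> 1"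
    and f: "f \<noteq> 0" "\<And>w. w \<in> V \<Longrightarrow> f \<bullet> w = 0"
    and hypn: "\<And>v. v \<noteq> 0 \<Longrightarrow> measure (conv_pow \<nu> n) {g. f \<bullet> (g *v v) = 0 \<or>
             ln (norm f * opnorm g * norm v / \<bar>f \<bullet> (g *v v)\<bar>) > \<bar>ln r\<bar>} \<le> B"
  shows "measure \<xi> (nbhd V r) \<le> B"
proof -
  let ?M = "conv_pow \<nu> n" and ?A = "nbhd V r"
  let ?\<Phi> = "\<lambda>(g::real^'n^'n, l::(real^'n) set). pact g l"
  have p: "prob_space \<nu>" "sets \<nu> = sets borel" using nu unfolding prob_GL_def by auto
  have pM: "prob_space ?M" by (rule prob_conv_pow[OF p])
  interpret PM: prob_space ?M by (rule pM)
  interpret PX: prob_space \<xi> by (rule xi(1))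
  interpret P: pair_sigma_finite ?M \<xi>
    using pM xi(1) unfolding pair_sigma_finite_def by (auto intro: prob_space_imp_sigma_finite)
  have spx: "space \<xi> = Pspace" using sets_eq_imp_space_eq[OF xi(2)] space_PS by simp
  have A: "?A \<in> sets proj_space" by (rule nbhd_sets)
  have Q: "?\<Phi> -` ?A \<inter> space (?M \<Otimes>\<^sub>M \<xi>) \<in> sets (?M \<Otimes>\<^sub>M \<xi>)"
    using measurable_sets[OF pact_meas_gen[OF sets_conv_pow xi(2)] A] .
  have "(axis undefined 1 :: real^'n) \<noteq> 0" by (metis axis_nth zero_index zero_neq_one)
  then have B0: "0 \<le> B" by (rule order_trans[OF measure_nonneg hypn])
  have "emeasure \<xi> ?A = emeasure (distr (?M \<Otimes>\<^sub>M \<xi>) proj_space ?\<Phi>) ?A"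
    using stat_pow[OF nu xi, of n] by simp
  also have "\<dots> = emeasure (?M \<Otimes>\<^sub>M \<xi>) (?\<Phi> -` ?A \<inter> space (?M \<Otimes>\<^sub>M \<xi>))"
    by (rule emeasure_distr[OF pact_meas_gen[OF sets_conv_pow xi(2)] A])
  also have "\<dots> = (\<integral>\<^sup>+ l. emeasure ?M ((\<lambda>g. (g, l)) -` (?\<Phi> -` ?A \<inter> space (?M \<Otimes>\<^sub>M \<xi>))) \<partial>\<xi>)"
    by (rule P.emeasure_pair_measure_alt2[OF Q])
  also have "\<dots> \<le> (\<integral>\<^sup>+ l. ennreal B \<partial>\<xi>)"
  proof (rule nn_integral_mono)
    fix l assume "l \<in> space \<xi>"
    then have l: "l \<in> Pspace" using spx by simp
    define v where "v = sec l"
    have v: "v \<noteq> 0" "line v = l" using sec_Pspace[OF l] unfolding v_def by auto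
    let ?Bad = "{g::real^'n^'n. f \<bullet> (g *v v) = 0 \<or>
             ln (norm f * opnorm g * norm v / \<bar>f \<bullet> (g *v v)\<bar>) > \<bar>ln r\<bar>}"
    have sl: "(\<lambda>g. (g, l)) -` (?\<Phi> -` ?A \<inter> space (?M \<Otimes>\<^sub>M \<xi>)) = {g. pact g l \<in> ?A}"
      using l by (auto simp: space_pair_measure spx space_conv_pow)
    have "emeasure ?M {g. pact g l \<in> ?A} \<le> emeasure ?M ?Bad"
    proof (rule emeasure_mono_AE)
      show "?Bad \<in> sets ?M" using bad_sets by (simp add: sets_conv_pow)
      show "AE g in ?M. g \<in> {g. pact g l \<in> ?A} \<longrightarrow> g \<in> ?Bad"
        using AE_inv_conv_pow[OF nu, of n]
      proof (rule AE_mp[OF _ AE_I2], intro impI)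
        fix g :: "real^'n^'n" assume g: "invertible g" "g \<in> {g. pact g l \<in> ?A}"
        then show "g \<in> ?Bad"
          using bad_incl[OF f(2) f(1) r v(1) g(1)] v(2) by auto
      qed
    qed
    also have "\<dots> = ennreal (measure ?M ?Bad)" by (rule PM.emeasure_eq_measure)
    also have "\<dots> \<le> ennreal B" using hypn[OF v(1)] by (rule ennreal_leI)
    finally show "emeasure ?M ((\<lambda>g. (g, l)) -` (?\<Phi> -` ?A \<inter> space (?M \<Otimes>\<^sub>M \<xi>))) \<le> ennreal B"
      unfolding sl .
  qed
  also have "\<dots> = ennreal B" using PX.emeasure_space_1 by simp
  finally have "ennreal (measure \<xi> ?A) \<le> ennreal B" using PX.emeasure_eq_measure by simp
  then show ?thesis using B0 by simp
qed




lemma ennreal_suminf_head: "(\<Sum>n. f n :: ennreal) = f 0 + (\<Sum>n. f (Suc n))"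
proof -
  have "(\<lambda>n. f (Suc n)) sums (\<Sum>n. f (Suc n))" by (rule summable_sums) simp
  then have "f sums ((\<Sum>n. f (Suc n)) + f 0)" by (rule sums_Suc)
  then show ?thesis by (simp add: sums_unique[symmetric] add.commute)
qed

lemma ennreal_suminf_swap: "(\<Sum>j. \<Sum>k. f j k :: ennreal) = (\<Sum>k. \<Sum>j. f j k)"
proof -
  have "(\<Sum>j. \<Sum>k. f j k) = (\<Sum>j. \<integral>\<^sup>+ k. f j k \<partial>count_space UNIV)"
    by (simp add: nn_integral_count_space_nat)
  also have "\<dots> = (\<integral>\<^sup>+ k. (\<Sum>j. f j k) \<partial>count_space UNIV)"
    by (rule nn_integral_suminf[symmetric]) simp
  also have "\<dots> = (\<Sum>k. \<Sum>j. f j k)" by (simp add: nn_integral_count_space_nat)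
  finally show ?thesis .
qed

lemma ennreal_suminf_one: "(\<Sum>j::nat. (1::ennreal)) = \<infinity>"
proof -
  have "(\<Sum>j::nat. (1::ennreal)) = (\<integral>\<^sup>+ j. 1 \<partial>count_space (UNIV::nat set))"
    by (rule nn_integral_count_space_nat[symmetric])
  also have "\<dots> = 1 * emeasure (count_space (UNIV::nat set)) UNIV"
    by (simp only: nn_integral_const space_count_space)
  also have "\<dots> = \<infinity>" by simp
  finally show ?thesis .
qed

lemma count_le:
  fixes X :: real assumes "X \<ge> 0"
  shows "(\<Sum>j. if real (Suc j) < X then 1 else 0 :: ennreal) \<le> ennreal X"
proof -
  let ?F = "{j::nat. real (Suc j) < X}"
  have sub: "?F \<subseteq> {..< nat \<lfloor>X\<rfloor>}"
  proof
    fix j assume "j \<in> ?F"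
    then have "real (Suc j) < X" by simp
    then have "int (Suc j) \<le> \<lfloor>X\<rfloor>" by linarith
    then show "j \<in> {..< nat \<lfloor>X\<rfloor>}" by simp
  qed
  then have fin: "finite ?F" by (rule finite_subset) simp
  have "(\<Sum>j. if real (Suc j) < X then 1 else 0 :: ennreal) = (\<Sum>j\<in>?F. if real (Suc j) < X then 1 else 0)"
    by (rule suminf_finite[OF fin]) simp
  also have "\<dots> = of_nat (card ?F)" by simp
  also have "\<dots> \<le> of_nat (nat \<lfloor>X\<rfloor>)"
    using card_mono[OF _ sub] by simp
  also have "\<dots> = ennreal (real (nat \<lfloor>X\<rfloor>))" by (simp add: ennreal_of_nat_eq_real_of_nat)
  also have "\<dots> \<le> ennreal X" using assms by (intro ennreal_leI) linarith
  finally show ?thesis .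
qed

lemma Ntail_bounds:
  assumes "prob_space \<nu>"
  shows "0 \<le> Ntail \<nu> a" "Ntail \<nu> a \<le> 1"
  unfolding Ntail_def using prob_space.prob_le_1[OF assms] by auto

lemma tail_sum:
  fixes \<nu> :: "(real^'n::finite^'n) measure"
  assumes pnu: "prob_space \<nu>" and p: "p > 0" and q: "q > 0"
  shows "(\<Sum>j. ennreal (Ntail \<nu> (real j powr (1 / p) / q)))
    \<le> 1 + ennreal (q powr p) * (\<integral>\<^sup>+ g. ennreal (Nfun g powr p) \<partial>\<nu>)"
proof -
  interpret P: prob_space \<nu> by (rule pnu)
  define S where "S j = {g \<in> space \<nu>. Nfun g > real (Suc j) powr (1 / p) / q}" for j
  define T where "T j = (if S j \<in> sets \<nu> then S j else {})" for j
  have Ts: "T j \<in> sets \<nu>" for j unfolding T_def by auto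
  have TS: "T j \<subseteq> S j" for j unfolding T_def by auto
  have NT: "ennreal (Ntail \<nu> (real (Suc j) powr (1 / p) / q)) = emeasure \<nu> (T j)" for j
  proof -
    have "Ntail \<nu> (real (Suc j) powr (1 / p) / q) = measure \<nu> (T j)"
      unfolding Ntail_def S_def[symmetric] T_def by (auto simp: measure_notin_sets)
    then show ?thesis using P.emeasure_eq_measure by simp
  qed
  define c where "c = ennreal (q powr p)"
  define c' where "c' = ennreal (1 / q powr p)"
  have cc: "c * c' = 1" unfolding c_def c'_def using q by (simp add: ennreal_mult'[symmetric])
  define \<psi> where "\<psi> g = (\<Sum>j. indicator (T j) g :: ennreal)" for g
  have \<psi>m: "\<psi> \<in> borel_measurable \<nu>" unfolding \<psi>_def using Ts by measurable
  have \<psi>le: "\<psi> g \<le> c * ennreal (Nfun g powr p)" if "g \<in> space \<nu>" for g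
  proof (cases "Nfun g > 0")
    case False
    have "indicator (T j) g = (0::ennreal)" for j
    proof -
      have "real (Suc j) powr (1 / p) / q > 0" using q by simp
      then have "g \<notin> S j" using False unfolding S_def by auto
      then show ?thesis using TS[of j] by (auto simp: indicator_def)
    qed
    then show ?thesis unfolding \<psi>_def by simp
  next
    case True
    define X where "X = (q * Nfun g) powr p"
    have X0: "X \<ge> 0" unfolding X_def by simp
    have ind: "indicator (T j) g \<le> (if real (Suc j) < X then 1 else 0 :: ennreal)" for j
    proof (cases "g \<in> T j")
      case True
      then have "Nfun g > real (Suc j) powr (1 / p) / q" using TS[of j] unfolding S_def by auto
      then have lt: "real (Suc j) powr (1 / p) < q * Nfun g" using q by (simp add: field_simps)
      have "(real (Suc j) powr (1 / p)) powr p < (q * Nfun g) powr p"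
        by (rule powr_less_mono2[OF p _ lt]) simp
      moreover have "(real (Suc j) powr (1 / p)) powr p = real (Suc j)"
        using p by (simp add: powr_powr)
      ultimately have "real (Suc j) < X" unfolding X_def by simp
      then show ?thesis using True by simp
    qed simp
    have "\<psi> g \<le> (\<Sum>j. if real (Suc j) < X then 1 else 0 :: ennreal)"
      unfolding \<psi>_def by (rule suminf_le[OF ind]) simp_all
    also have "\<dots> \<le> ennreal X" by (rule count_le[OF X0])
    also have "\<dots> = c * ennreal (Nfun g powr p)"
      unfolding X_def c_def using q True by (simp add: powr_mult ennreal_mult'')
    finally show ?thesis .
  qed
  have "(\<Sum>j. ennreal (Ntail \<nu> (real j powr (1 / p) / q)))
      = ennreal (Ntail \<nu> (real 0 powr (1 / p) / q)) + (\<Sum>j. ennreal (Ntail \<nu> (real (Suc j) powr (1 / p) / q)))"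
    by (rule ennreal_suminf_head)
  also have "\<dots> = ennreal (Ntail \<nu> (real 0 powr (1 / p) / q)) + (\<Sum>j. emeasure \<nu> (T j))"
    by (simp only: NT)
  also have "\<dots> \<le> 1 + (\<Sum>j. emeasure \<nu> (T j))"
    using Ntail_bounds(2)[OF pnu] by (intro add_mono) auto
  also have "(\<Sum>j. emeasure \<nu> (T j)) = (\<integral>\<^sup>+ g. \<psi> g \<partial>\<nu>)"
    unfolding \<psi>_def using Ts by (simp add: nn_integral_suminf)
  also have "\<dots> = c * (c' * (\<integral>\<^sup>+ g. \<psi> g \<partial>\<nu>))" by (simp add: cc mult.assoc[symmetric])
  also have "c' * (\<integral>\<^sup>+ g. \<psi> g \<partial>\<nu>) = (\<integral>\<^sup>+ g. c' * \<psi> g \<partial>\<nu>)"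
    by (rule nn_integral_cmult[OF \<psi>m, symmetric])
  also have "\<dots> \<le> (\<integral>\<^sup>+ g. ennreal (Nfun g powr p) \<partial>\<nu>)"
  proof (rule nn_integral_mono)
    fix g assume g: "g \<in> space \<nu>"
    have "c' * \<psi> g \<le> c' * (c * ennreal (Nfun g powr p))" by (rule mult_left_mono[OF \<psi>le[OF g]]) simp
    also have "\<dots> = ennreal (Nfun g powr p)" using cc by (simp add: mult.assoc[symmetric] mult.commute)
    finally show "c' * \<psi> g \<le> ennreal (Nfun g powr p)" .
  qed
  finally show ?thesis unfolding c_def by (simp add: mult_left_mono add_left_mono)
qed


lemma K_summable:
  fixes \<beta> p :: real assumes b: "\<beta> > 0"
  shows "summable (\<lambda>k. real (Suc k) powr p * exp (- \<beta> * real (Suc k)))"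
proof -
  define m :: nat where "m = nat \<lceil>p\<rceil> + 2"
  have m: "real m \<ge> p + 2" "m > 0" unfolding m_def by linarith+
  define D where "D = (real m / \<beta>) ^ m"
  have bound: "real (Suc k) powr p * exp (- \<beta> * real (Suc k)) \<le> D * inverse (real (Suc k) ^ 2)" for k
  proof -
    let ?x = "\<beta> * real (Suc k)" and ?s = "real (Suc k)"
    have x: "?x > 0" using b by simp
    have "(?x / real m) ^ m \<le> (1 + ?x / real m) ^ m"
      using x m by (intro power_mono) auto
    also have "\<dots> \<le> exp ?x"
      using x m by (intro exp_ge_one_plus_x_over_n_power_n) auto
    finally have e: "(?x / real m) ^ m \<le> exp ?x" .
    have xm: "(?x / real m) ^ m > 0" using x m by simp
    have "exp (- ?x) = inverse (exp ?x)" by (simp add: exp_minus)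
    also have "\<dots> \<le> inverse ((?x / real m) ^ m)"
      using e xm by (intro le_imp_inverse_le) auto
    also have "\<dots> = D * inverse (?s ^ m)"
    proof -
      have gen: "inverse ((\<beta> * s / real m) ^ m) = D * inverse (s ^ m)" if "s > 0" for s :: real
        unfolding D_def using b that m by (simp add: power_divide power_mult_distrib field_simps)
      show ?thesis by (rule gen) simp
    qed
    finally have ex: "exp (- ?x) \<le> D * inverse (?s ^ m)" .
    have D0: "D \<ge> 0" unfolding D_def using b by simp
    have "?s powr p * exp (- ?x) \<le> ?s powr p * (D * inverse (?s ^ m))"
      using ex by (intro mult_left_mono) auto
    also have "\<dots> = D * ?s powr (p - real m)"
      by (simp add: powr_diff powr_realpow divide_inverse)
    also have "\<dots> \<le> D * ?s powr (-2)"
      using m D0 by (intro mult_left_mono powr_mono) auto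
    also have "\<dots> = D * inverse (?s ^ 2)"
      by (simp add: powr_minus powr_realpow)
    finally show ?thesis by (simp add: mult.assoc)
  qed
  have "summable (\<lambda>k. inverse (real (Suc k) ^ 2))"
    using inverse_power_summable[of 2, where 'a=real] summable_Suc_iff[of "\<lambda>n. inverse (real n ^ 2)"]
    by simp
  then have "summable (\<lambda>k. D * inverse (real (Suc k) ^ 2))" by (rule summable_mult)
  then show ?thesis
    by (rule summable_comparison_test'[where N=0]) (use bound in auto)
qed

lemma geom_summable:
  fixes \<beta> :: real assumes b: "\<beta> > 0"
  shows "summable (\<lambda>k. exp (- \<beta> * real (Suc k)))"
  using K_summable[OF b, of 0] by simp


lemma S_summable:
  assumes "prob_space \<nu>" "\<beta> > 0" "C > 0"
  shows "summable (\<lambda>k. C * exp (- \<beta> * real (Suc k)) * Ntail \<nu> (t / real (Suc k)))"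
proof (rule summable_comparison_test'[where N=0])
  show "summable (\<lambda>k. C * exp (- \<beta> * real (Suc k)))"
    by (rule summable_mult[OF geom_summable[OF assms(2)]])
  fix k :: nat
  show "norm (C * exp (- \<beta> * real (Suc k)) * Ntail \<nu> (t / real (Suc k))) \<le> C * exp (- \<beta> * real (Suc k))"
    using Ntail_bounds[OF assms(1)] assms(3)
    by (simp add: abs_mult mult_left_le)
qed

lemma S_nonneg:
  assumes "prob_space \<nu>" "\<beta> > 0" "C > 0"
  shows "0 \<le> (\<Sum>k. C * exp (- \<beta> * real (Suc k)) * Ntail \<nu> (t / real (Suc k)))"
  by (rule suminf_nonneg[OF S_summable[OF assms]]) (use Ntail_bounds[OF assms(1)] assms in auto)





lemma dist_PV_real:
  fixes V :: "(real^'n::finite) set"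
  assumes V: "subspace V" "V \<noteq> {0}"
  shows "\<exists>d. dist_PV V l = ereal d \<and> 0 \<le> d \<and> d \<le> 1"
proof -
  obtain v where v: "v \<in> V" "v \<noteq> 0" using V subspace_0[OF V(1)] by blast
  let ?D = "dist_PV V l"
  have b: "0 \<le> pdist a b" "pdist a b \<le> 1" for a b :: "(real^'n) set"
    unfolding pdist_def by (rule vdist_nonneg, rule vdist_le1)
  have "?D \<le> ereal (pdist (line v) l)" unfolding dist_PV_def using v by (intro INF_lower) auto
  also have "\<dots> \<le> 1" using b by simp
  finally have D1: "?D \<le> 1" .
  have D0: "0 \<le> ?D" unfolding dist_PV_def using b by (intro INF_greatest) auto
  show ?thesis
  proof (cases ?D)
    case (real d) then show ?thesis using D0 D1 by auto
  next
    case PInf then show ?thesis using D1 by simp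
  next
    case MInf then show ?thesis using D0 by simp
  qed
qed

lemma phi_le:
  fixes V :: "(real^'n::finite) set"
  assumes V: "subspace V" "V \<noteq> {0}" and l: "l \<in> Pspace" and p: "p > 0"
  shows "(case dist_PV V l of ereal d \<Rightarrow> (if d = 0 then \<infinity> else ennreal (\<bar>ln d\<bar> powr p)) | _ \<Rightarrow> \<infinity>)
    \<le> (\<Sum>j. indicator (nbhd V (exp (- (real j powr (1 / p))))) l)"
proof -
  obtain d where d: "dist_PV V l = ereal d" "0 \<le> d" "d \<le> 1" using dist_PV_real[OF V] by blast
  have mem: "l \<in> nbhd V r \<longleftrightarrow> d < r" for r unfolding nbhd_def using l d(1) by simp
  show ?thesis
  proof (cases "d = 0")
    case True
    have "indicator (nbhd V (exp (- (real j powr (1 / p))))) l = (1::ennreal)" for j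
      using mem True by simp
    then show ?thesis using d(1) True by (simp add: ennreal_suminf_one)
  next
    case False
    then have d0: "d > 0" using d(2) by simp
    define L where "L = - ln d"
    have L0: "L \<ge> 0" unfolding L_def using d0 d(3) by simp
    have aL: "\<bar>ln d\<bar> = L" unfolding L_def using d0 d(3) by simp
    define X where "X = L powr p"
    define m where "m = nat \<lceil>X\<rceil>"
    have ind1: "indicator (nbhd V (exp (- (real j powr (1 / p))))) l = (1::ennreal)" if "j < m" for j
    proof -
      have "real j < X" using that unfolding m_def by linarith
      then have "real j powr (1 / p) < X powr (1 / p)" using p by (intro powr_less_mono2) auto
      also have "X powr (1 / p) = L" unfolding X_def using p L0 by (simp add: powr_powr powr_one)
      finally have "- L < - (real j powr (1 / p))" by simp
      then have "exp (- L) < exp (- (real j powr (1 / p)))" by simp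
      moreover have "exp (- L) = d" unfolding L_def using d0 by simp
      ultimately show ?thesis using mem by simp
    qed
    have "ennreal (\<bar>ln d\<bar> powr p) = ennreal X" unfolding X_def aL ..
    also have "\<dots> \<le> ennreal (real m)" unfolding m_def by (intro ennreal_leI) linarith
    also have "\<dots> = (\<Sum>j<m. indicator (nbhd V (exp (- (real j powr (1 / p))))) l)"
      using ind1 by (simp add: ennreal_of_nat_eq_real_of_nat)
    also have "\<dots> \<le> (\<Sum>j. indicator (nbhd V (exp (- (real j powr (1 / p))))) l)"
      by (rule sum_le_suminf) auto
    finally show ?thesis using d(1) False by simp
  qed
qed

theorem corollary1p14:
  fixes \<nu> :: "(real^'n::finite^'n) measure"
    and \<xi> :: "(real^'n) set measure"
    and C \<beta> :: real
  assumes dim: "CARD('n) \<ge> 2"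
    and nu: "prob_GL \<nu>"
    and si: "strongly_irreducible \<nu>"
    and prox: "proximal \<nu>"
    and C: "C > 0" and beta: "\<beta> > 0"
    and hyp: "\<And>(f::real^'n) (v::real^'n) (n::nat) (t::real).
       f \<noteq> 0 \<Longrightarrow> v \<noteq> 0 \<Longrightarrow> t \<ge> 0 \<Longrightarrow>
       measure (conv_pow \<nu> n)
         {g. f \<bullet> (g *v v) = 0 \<or>
             ln (norm f * opnorm g * norm v / \<bar>f \<bullet> (g *v v)\<bar>) > t}
       \<le> C * exp (- \<beta> * real n)
          + (\<Sum>k. C * exp (- \<beta> * real (Suc k)) * Ntail \<nu> (t / real (Suc k)))"
    and xi: "prob_space \<xi>" "sets \<xi> = sets proj_space" "stationary \<nu> \<xi>"
  shows
    "(\<forall>V r. subspace V \<and> V \<noteq> UNIV \<and> 0 < r \<and> r \<le> 1 \<longrightarrow>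
        measure \<xi> (nbhd V r) \<le> zeta_tail C \<beta> \<nu> \<bar>ln r\<bar>)
     \<and> (\<forall>p>0. (\<integral>\<^sup>+ g. ennreal (Nfun g powr p) \<partial>\<nu>) < \<infinity> \<longrightarrow>
         (\<exists>C'. \<forall>V. subspace V \<and> V \<noteq> UNIV \<and> V \<noteq> {0} \<longrightarrow>
            (\<integral>\<^sup>+ l. (case dist_PV V l of
                        ereal d \<Rightarrow> (if d = 0 then \<infinity> else ennreal (\<bar>ln d\<bar> powr p))
                      | _ \<Rightarrow> \<infinity>) \<partial>\<xi>) \<le> ennreal C'))
     \<and> (\<forall>p>0. (\<exists>M. \<forall>t\<ge>0. t powr p * Ntail \<nu> t \<le> M) \<longrightarrow>
         (\<exists>C'. \<forall>V r. subspace V \<and> V \<noteq> UNIV \<and> 0 < r \<and> r < 1 \<longrightarrow>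
            measure \<xi> (nbhd V r) \<le> C' * \<bar>ln r\<bar> powr (- p)))"
proof -
  have pnu: "prob_space \<nu>" using nu unfolding prob_GL_def by auto
  interpret PX: prob_space \<xi> by (rule xi(1))
  define S where "S t = (\<Sum>k. C * exp (- \<beta> * real (Suc k)) * Ntail \<nu> (t / real (Suc k)))" for t
  have S0: "0 \<le> S t" for t unfolding S_def by (rule S_nonneg[OF pnu beta C])
  have partA: "measure \<xi> (nbhd V r) \<le> S \<bar>ln r\<bar>"
    if V: "subspace V" "V \<noteq> UNIV" and r: "0 < r" "r \<le> 1" for V r
  proof -
    have sp: "span V = V" using V(1) by (simp add: span_eq_iff)
    have "dim V \<noteq> DIM(real^'n)" using V(2) dim_eq_full[of V] sp by metis
    then have dlt: "dim V < DIM(real^'n)" using dim_subset_UNIV[of V] by linarith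
    then obtain f :: "real^'n" where f: "f \<noteq> 0" "\<And>y. y \<in> span V \<Longrightarrow> orthogonal f y"
      using orthogonal_to_subspace_exists[OF dlt] by blast
    have fV: "f \<bullet> w = 0" if "w \<in> V" for w
      using f(2)[OF span_base[OF that]] unfolding orthogonal_def .
    have bnd: "measure \<xi> (nbhd V r) \<le> C * exp (- \<beta> * real n) + S \<bar>ln r\<bar>" for n
    proof (rule core_bound[OF nu xi r f(1), where V=V and n=n])
      show "\<And>w. w \<in> V \<Longrightarrow> f \<bullet> w = 0" by (rule fV)
      fix v :: "real^'n" assume v: "v \<noteq> 0"
      show "measure (conv_pow \<nu> n) {g. f \<bullet> (g *v v) = 0 \<or>
             ln (norm f * opnorm g * norm v / \<bar>f \<bullet> (g *v v)\<bar>) > \<bar>ln r\<bar>}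
          \<le> C * exp (- \<beta> * real n) + S \<bar>ln r\<bar>"
        unfolding S_def by (rule hyp[OF f(1) v]) simp
    qed
    have "(\<lambda>n. C * exp (- \<beta> * real n) + S \<bar>ln r\<bar>) \<longlonglongrightarrow> 0 + S \<bar>ln r\<bar>"
    proof (intro tendsto_add tendsto_const)
      have e: "exp (- \<beta> * real n) = exp (- \<beta>) ^ n" for n
        using exp_of_nat_mult[of n "- \<beta>"] by (simp add: mult.commute)
      have "(\<lambda>n. exp (- \<beta>) ^ n) \<longlonglongrightarrow> 0" using beta by (intro LIMSEQ_power_zero) simp
      then have "(\<lambda>n. C * exp (- \<beta>) ^ n) \<longlonglongrightarrow> C * 0" by (intro tendsto_mult tendsto_const)
      then show "(\<lambda>n. C * exp (- \<beta> * real n)) \<longlonglongrightarrow> 0" unfolding e by simp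
    qed
    then show ?thesis using bnd by (intro LIMSEQ_le_const) auto
  qed
  have zS: "zeta_tail C \<beta> \<nu> t = min 1 (S t)" for t unfolding zeta_tail_def S_def ..
  have A: "\<forall>V r. subspace V \<and> V \<noteq> UNIV \<and> 0 < r \<and> r \<le> 1 \<longrightarrow>
        measure \<xi> (nbhd V r) \<le> zeta_tail C \<beta> \<nu> \<bar>ln r\<bar>"
    using partA PX.measure_le_1 by (auto simp: zS)
  have Cpart: "\<forall>p>0. (\<exists>M. \<forall>t\<ge>0. t powr p * Ntail \<nu> t \<le> M) \<longrightarrow>
         (\<exists>C'. \<forall>V r. subspace V \<and> V \<noteq> UNIV \<and> 0 < r \<and> r < 1 \<longrightarrow>
            measure \<xi> (nbhd V r) \<le> C' * \<bar>ln r\<bar> powr (- p))"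
  proof (intro allI impI)
    fix p :: real assume p: "p > 0" and "\<exists>M. \<forall>t\<ge>0. t powr p * Ntail \<nu> t \<le> M"
    then obtain M where M: "\<And>t. t \<ge> 0 \<Longrightarrow> t powr p * Ntail \<nu> t \<le> M" by auto
    define K where "K = (\<Sum>k. real (Suc k) powr p * exp (- \<beta> * real (Suc k)))"
    have Ks: "summable (\<lambda>k. real (Suc k) powr p * exp (- \<beta> * real (Suc k)))"
      by (rule K_summable[OF beta])
    show "\<exists>C'. \<forall>V r. subspace V \<and> V \<noteq> UNIV \<and> 0 < r \<and> r < 1 \<longrightarrow>
            measure \<xi> (nbhd V r) \<le> C' * \<bar>ln r\<bar> powr (- p)"
    proof (intro exI[of _ "C * M * K"] allI impI, elim conjE)
      fix V :: "(real^'n) set" and r :: real assume V: "subspace V" "V \<noteq> UNIV" and r: "0 < r" "r < 1"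
      define t where "t = \<bar>ln r\<bar>"
      have t: "t > 0" unfolding t_def using r by simp
      have tp: "t powr p > 0" using t by simp
      have trm: "C * exp (- \<beta> * real (Suc k)) * Ntail \<nu> (t / real (Suc k))
          \<le> (C * M / t powr p) * (real (Suc k) powr p * exp (- \<beta> * real (Suc k)))" for k
      proof -
        have q: "t / real (Suc k) \<ge> 0" using t by simp
        have "(t / real (Suc k)) powr p * Ntail \<nu> (t / real (Suc k)) \<le> M" by (rule M[OF q])
        then have "Ntail \<nu> (t / real (Suc k)) \<le> M * real (Suc k) powr p / t powr p"
          using t tp by (simp add: powr_divide field_simps)
        then have "C * exp (- \<beta> * real (Suc k)) * Ntail \<nu> (t / real (Suc k))
            \<le> C * exp (- \<beta> * real (Suc k)) * (M * real (Suc k) powr p / t powr p)"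
          using C by (intro mult_left_mono) auto
        then show ?thesis by (simp add: field_simps)
      qed
      have "measure \<xi> (nbhd V r) \<le> S t" unfolding t_def using partA[OF V] r by simp
      also have "\<dots> \<le> (\<Sum>k. (C * M / t powr p) * (real (Suc k) powr p * exp (- \<beta> * real (Suc k))))"
        unfolding S_def
        by (rule suminf_le[OF trm S_summable[OF pnu beta C] summable_mult[OF Ks]])
      also have "\<dots> = (C * M / t powr p) * K" unfolding K_def by (rule suminf_mult[OF Ks])
      also have "\<dots> = C * M * K * t powr (- p)" by (simp add: powr_minus divide_inverse)
      finally show "measure \<xi> (nbhd V r) \<le> C * M * K * \<bar>ln r\<bar> powr (- p)" unfolding t_def .
    qed
  qed
  have Bpart: "\<forall>p>0. (\<integral>\<^sup>+ g. ennreal (Nfun g powr p) \<partial>\<nu>) < \<infinity> \<longrightarrow>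
         (\<exists>C'. \<forall>V. subspace V \<and> V \<noteq> UNIV \<and> V \<noteq> {0} \<longrightarrow>
            (\<integral>\<^sup>+ l. (case dist_PV V l of
                        ereal d \<Rightarrow> (if d = 0 then \<infinity> else ennreal (\<bar>ln d\<bar> powr p))
                      | _ \<Rightarrow> \<infinity>) \<partial>\<xi>) \<le> ennreal C')"
  proof (intro allI impI)
    fix p :: real assume p: "p > 0" and Ifin: "(\<integral>\<^sup>+ g. ennreal (Nfun g powr p) \<partial>\<nu>) < \<infinity>"
    define I where "I = (\<integral>\<^sup>+ g. ennreal (Nfun g powr p) \<partial>\<nu>)"
    have "I < top" using Ifin unfolding I_def by simp
    then obtain Ir where Ir: "Ir \<ge> 0" "I = ennreal Ir" unfolding less_top_ennreal by blast
    define a where "a k = C * exp (- \<beta> * real (Suc k))" for k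
    define b where "b k = a k * (1 + real (Suc k) powr p * Ir)" for k
    have a0: "a k \<ge> 0" for k unfolding a_def using C by simp
    have b0: "b k \<ge> 0" for k unfolding b_def using a0 Ir by simp
    have beq: "b = (\<lambda>k. C * exp (- \<beta> * real (Suc k)) + (C * Ir) * (real (Suc k) powr p * exp (- \<beta> * real (Suc k))))"
      unfolding b_def a_def by (auto simp: algebra_simps)
    have bs: "summable b" unfolding beq
      by (intro summable_add summable_mult geom_summable[OF beta] K_summable[OF beta])
    show "\<exists>C'. \<forall>V. subspace V \<and> V \<noteq> UNIV \<and> V \<noteq> {0} \<longrightarrow>
            (\<integral>\<^sup>+ l. (case dist_PV V l of
                        ereal d \<Rightarrow> (if d = 0 then \<infinity> else ennreal (\<bar>ln d\<bar> powr p))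
                      | _ \<Rightarrow> \<infinity>) \<partial>\<xi>) \<le> ennreal C'"
    proof (intro exI[of _ "suminf b"] allI impI, elim conjE)
      fix V :: "(real^'n) set" assume V: "subspace V" "V \<noteq> UNIV" "V \<noteq> {0}"
      define t where "t j = real j powr (1 / p)" for j :: nat
      define N where "N j = nbhd V (exp (- t j))" for j
      have Ns: "N j \<in> sets \<xi>" for j unfolding N_def using nbhd_sets xi(2) by simp
      have spx: "space \<xi> = Pspace" using sets_eq_imp_space_eq[OF xi(2)] space_PS by simp
      have "(\<integral>\<^sup>+ l. (case dist_PV V l of
                        ereal d \<Rightarrow> (if d = 0 then \<infinity> else ennreal (\<bar>ln d\<bar> powr p))
                      | _ \<Rightarrow> \<infinity>) \<partial>\<xi>) \<le> (\<integral>\<^sup>+ l. (\<Sum>j. indicator (N j) l) \<partial>\<xi>)"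
        unfolding N_def t_def by (rule nn_integral_mono) (use phi_le[OF V(1,3) _ p] spx in auto)
      also have "\<dots> = (\<Sum>j. emeasure \<xi> (N j))"
        using Ns by (simp add: nn_integral_suminf)
      also have "\<dots> \<le> (\<Sum>j. ennreal (S (t j)))"
      proof (rule suminf_le)
        fix j
        have t0: "t j \<ge> 0" unfolding t_def by simp
        have "measure \<xi> (N j) \<le> S \<bar>ln (exp (- t j))\<bar>" unfolding N_def
          by (rule partA[OF V(1,2)]) (use t0 in auto)
        then have "measure \<xi> (N j) \<le> S (t j)" using t0 by simp
        then show "emeasure \<xi> (N j) \<le> ennreal (S (t j))"
          using PX.emeasure_eq_measure by (simp add: ennreal_leI)
      qed simp_all
      also have "\<dots> = (\<Sum>j. \<Sum>k. ennreal (a k * Ntail \<nu> (t j / real (Suc k))))"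
        unfolding S_def a_def
        by (intro suminf_cong suminf_ennreal2[symmetric] S_summable[OF pnu beta C])
           (use Ntail_bounds(1)[OF pnu] C in auto)
      also have "\<dots> = (\<Sum>k. \<Sum>j. ennreal (a k * Ntail \<nu> (t j / real (Suc k))))"
        by (rule ennreal_suminf_swap)
      also have "\<dots> = (\<Sum>k. ennreal (a k) * (\<Sum>j. ennreal (Ntail \<nu> (t j / real (Suc k)))))"
        using a0 Ntail_bounds(1)[OF pnu] by (simp add: ennreal_mult)
      also have "\<dots> \<le> (\<Sum>k. ennreal (a k) * (1 + ennreal (real (Suc k) powr p) * I))"
      proof (rule suminf_le)
        fix k
        show "ennreal (a k) * (\<Sum>j. ennreal (Ntail \<nu> (t j / real (Suc k))))
            \<le> ennreal (a k) * (1 + ennreal (real (Suc k) powr p) * I)"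
          unfolding t_def I_def by (intro mult_left_mono tail_sum[OF pnu p]) auto
      qed simp_all
      also have "\<dots> = (\<Sum>k. ennreal (b k))"
      proof (rule suminf_cong)
        fix k
        have y: "0 \<le> real (Suc k) powr p * Ir" using Ir(1) by simp
        have "ennreal (b k) = ennreal (a k) * ennreal (1 + real (Suc k) powr p * Ir)"
          unfolding b_def using a0 y by (simp add: ennreal_mult)
        also have "ennreal (1 + real (Suc k) powr p * Ir) = 1 + ennreal (real (Suc k) powr p) * ennreal Ir"
          using Ir(1) y by (simp add: ennreal_plus ennreal_mult)
        finally show "ennreal (a k) * (1 + ennreal (real (Suc k) powr p) * I) = ennreal (b k)"
          unfolding Ir(2) by simp
      qed
      also have "\<dots> = ennreal (suminf b)" by (rule suminf_ennreal2[OF b0 bs])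
      finally show "(\<integral>\<^sup>+ l. (case dist_PV V l of
                        ereal d \<Rightarrow> (if d = 0 then \<infinity> else ennreal (\<bar>ln d\<bar> powr p))
                      | _ \<Rightarrow> \<infinity>) \<partial>\<xi>) \<le> ennreal (suminf b)" .
    qed
  qed
  show ?thesis using A Bpart Cpart by blast
qed


end
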